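(* Let $E$ be a real Banach space which is uniformly convex with modulus $\delta_E$, and let $d>0$. Let $A\subset E$ be a nonempty closed set which is weakly convex with modulus of nonconvexity $\gamma_A(\varepsilon)$, $\varepsilon\in[0,2d)$, with $d\,\delta_E(\varepsilon/d)>\gamma_A(\varepsilon)$ for all $\varepsilon\in(0,2d)$, and suppose condition (i) holds for $\delta(t)=d\,\delta_E(t/d)$ and $\gamma=\gamma_A$. Suppose further that $A\subset B_r(a)$ for some $a\in E$ and $r>0$ with $2r<d$, and that $\gamma_A(\varepsilon)<d\,\delta_E(\varepsilon/d)$ for all $\varepsilon\in(0,\operatorname{diam}A)$. Then $A$ is a continuous retract of $E$, i.e. there is a continuous map $\phi:E\to A$ with $\phi(x)=x$ for all $x\in A$.
   Context: $B_r(a)$ is the closed ball. $\delta_E(\varepsilon)=\sup\{\delta\ge0: B_\delta(\frac{x_1+x_2}{2})\subset B_1(0)\ \forall x_1,x_2\in B_1(0),\ \|x_1-x_2\|=\varepsilon\}$ on $[0,2)$; $E$ uniformly convex means $\delta_E>0$ on $(0,2)$. For closed $A$ and $\varepsilon>0$, $\gamma^0_A(\varepsilon)=\inf\{\gamma>0: B_\gamma(\frac{x_1+x_2}{2})\cap A\ne\emptyset\ \forall x_1,x_2\in A,\ \|x_1-x_2\|\le\varepsilon\}$; modulus of nonconvexity $\gamma_A(0)=0$, $\gamma_A(\varepsilon)=\lim_{\tau\downarrow\varepsilon}\gamma^0_A(\tau)$. $A$ is weakly convex with modulus $\gamma_A$ on $[0,d')$ if $\gamma_A(\varepsilon)<\varepsilon/2$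 for $\varepsilon\in(0,d')$. Condition (i) for moduli $\delta,\gamma$: there is $s_0>0$ such that for every $s\in(0,s_0]$: (1) there is $t_s>s$ with $\delta(t_s-s)=\gamma(t_s)$; (2) $t\mapsto\delta(t-s)-\gamma(t)$ is positive and increasing for $t>t_s$; (3) there is $t(s)>t_s$ with $\delta(t(s)-s)-\gamma(t(s))=s/2$. *)

theory Defs
  imports "HOL-Analysis.Analysis"
begin

definition mod_conv :: "'a::real_normed_vector itself \<Rightarrow> real \<Rightarrow> real" where
  "mod_conv _ \<epsilon> = Sup {\<delta>. \<delta> \<ge> 0 \<and>
      (\<forall>x1 x2::'a. x1 \<in> cball 0 1 \<and> x2 \<in> cball 0 1 \<and> norm (x1 - x2) = \<epsilon> \<longrightarrow>
          cball ((1/2) *\<^sub>R (x1 + x2)) \<delta> \<subseteq> cball 0 1)}"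

definition uniformly_convex_space :: "'a::real_normed_vector itself \<Rightarrow> bool" where
  "uniformly_convex_space T \<longleftrightarrow> (\<forall>\<epsilon>. 0 < \<epsilon> \<and> \<epsilon> < 2 \<longrightarrow> mod_conv T \<epsilon> > 0)"

definition mod_nonconv0 :: "'a::real_normed_vector set \<Rightarrow> real \<Rightarrow> real" where
  "mod_nonconv0 A \<epsilon> = Inf {\<gamma>. \<gamma> > 0 \<and>
      (\<forall>x1\<in>A. \<forall>x2\<in>A. norm (x1 - x2) \<le> \<epsilon> \<longrightarrow> cball ((1/2) *\<^sub>R (x1 + x2)) \<gamma> \<inter> A \<noteq> {})}"

definition mod_nonconv :: "'a::real_normed_vector set \<Rightarrow> real \<Rightarrow> real" where
  "mod_nonconv A \<epsilon> = (if \<epsilon> = 0 then 0 else Lim (at_right \<epsilon>) (mod_nonconv0 A))"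

definition weakly_convex_on :: "'a::real_normed_vector set \<Rightarrow> real \<Rightarrow> bool" where
  "weakly_convex_on A d' \<longleftrightarrow> (\<forall>\<epsilon>. 0 < \<epsilon> \<and> \<epsilon> < d' \<longrightarrow> mod_nonconv A \<epsilon> < \<epsilon> / 2)"

definition condition_i :: "(real \<Rightarrow> real) \<Rightarrow> (real \<Rightarrow> real) \<Rightarrow> real \<Rightarrow> bool" where
  "condition_i \<delta> \<gamma> D \<longleftrightarrow> (\<exists>s0>0. \<forall>s. 0 < s \<and> s \<le> s0 \<longrightarrow>
     (\<exists>ts. s < ts \<and> ts < D \<and> \<delta> (ts - s) = \<gamma> ts \<and>
        (\<forall>t. ts < t \<and> t < D \<longrightarrow> \<delta> (t - s) - \<gamma> t > 0) \<and>
        (\<forall>t1 t2. ts < t1 \<and> t1 < t2 \<and> t2 < D \<longrightarrow> \<delta> (t1 - s) - \<gamma> t1 < \<delta> (t2 - s) - \<gamma> t2) \<and>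
        (\<exists>t. ts < t \<and> t < D \<and> \<delta> (t - s) - \<gamma> t = s / 2)))"

end

theory Submission
  imports Defs
begin


lemma cball_sub_norm:
  fixes m c :: "'a::real_normed_vector"
  assumes nt: "\<exists>u::'a. u \<noteq> 0" and sub: "cball m \<delta> \<subseteq> cball c R" and d0: "\<delta> \<ge> 0"
  shows "norm (m - c) + \<delta> \<le> R"
proof -
  obtain u::'a where u: "u \<noteq> 0" using nt by blast
  define v where "v = (if m = c then sgn u else sgn (m - c))"
  have nv: "norm v = 1" using u by (auto simp: v_def norm_sgn)
  have "m + \<delta> *\<^sub>R v \<in> cball m \<delta>" using nv d0 by (simp add: dist_norm)
  hence "m + \<delta> *\<^sub>R v \<in> cball c R" using sub by blast
  hence le: "norm (m + \<delta> *\<^sub>R v - c) \<le> R" by (simp add: dist_norm norm_minus_commute)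
  have "m + \<delta> *\<^sub>R v - c = (norm (m - c) + \<delta>) *\<^sub>R v"
  proof (cases "m = c")
    case True then show ?thesis by simp
  next
    case False
    hence "norm (m - c) *\<^sub>R v = m - c" by (simp add: v_def sgn_div_norm)
    then show ?thesis by (simp add: algebra_simps)
  qed
  hence "norm (m + \<delta> *\<^sub>R v - c) = norm (m - c) + \<delta>" using nv d0 by simp
  with le show ?thesis by simp
qed

lemma mc_mid:
  fixes x1 x2 :: "'a::real_normed_vector"
  assumes nt: "\<exists>u::'a. u \<noteq> 0" and "norm x1 \<le> 1" "norm x2 \<le> 1" "norm (x1 - x2) = \<epsilon>"
  shows "norm ((1/2) *\<^sub>R (x1 + x2)) \<le> 1 - mod_conv TYPE('a) \<epsilon>"
proof -
  define S where "S = {\<delta>. \<delta> \<ge> 0 \<and>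
      (\<forall>x1 x2::'a. x1 \<in> cball 0 1 \<and> x2 \<in> cball 0 1 \<and> norm (x1 - x2) = \<epsilon> \<longrightarrow>
          cball ((1/2) *\<^sub>R (x1 + x2)) \<delta> \<subseteq> cball 0 1)}"
  have mc: "mod_conv TYPE('a) \<epsilon> = Sup S" by (simp add: mod_conv_def S_def)
  have "0 \<in> S"
  proof -
    have "norm ((1/2) *\<^sub>R (y1 + y2)) \<le> 1" if "norm y1 \<le> 1" "norm y2 \<le> 1" for y1 y2 :: 'a
    proof -
      have "norm ((1/2) *\<^sub>R (y1 + y2)) \<le> (1/2) * (norm y1 + norm y2)"
        by (simp add: norm_triangle_ineq)
      then show ?thesis using that by simp
    qed
    then show ?thesis by (auto simp: S_def dist_norm)
  qed
  moreover have "\<delta> \<le> 1 - norm ((1/2) *\<^sub>R (x1 + x2))" if "\<delta> \<in> S" for \<delta>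
  proof -
    have "cball ((1/2) *\<^sub>R (x1 + x2)) \<delta> \<subseteq> cball 0 1" "\<delta> \<ge> 0"
      using that assms by (auto simp: S_def dist_norm)
    from cball_sub_norm[OF nt this] show ?thesis by simp
  qed
  ultimately have "Sup S \<le> 1 - norm ((1/2) *\<^sub>R (x1 + x2))"
    by (intro cSup_least) auto
  then show ?thesis using mc by simp
qed

lemma mc_ge:
  fixes T :: "'a::real_normed_vector itself"
  assumes nt: "\<exists>u::'a. u \<noteq> 0" and v0: "v \<ge> 0"
    and H: "\<And>x1 x2::'a. norm x1 \<le> 1 \<Longrightarrow> norm x2 \<le> 1 \<Longrightarrow> norm (x1 - x2) = \<epsilon> \<Longrightarrow>
              norm ((1/2) *\<^sub>R (x1 + x2)) + v \<le> 1"
    and e: "0 \<le> \<epsilon>" "\<epsilon> \<le> 2"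
  shows "v \<le> mod_conv TYPE('a) \<epsilon>"
proof -
  define S where "S = {\<delta>. \<delta> \<ge> 0 \<and>
      (\<forall>x1 x2::'a. x1 \<in> cball 0 1 \<and> x2 \<in> cball 0 1 \<and> norm (x1 - x2) = \<epsilon> \<longrightarrow>
          cball ((1/2) *\<^sub>R (x1 + x2)) \<delta> \<subseteq> cball 0 1)}"
  have mc: "mod_conv TYPE('a) \<epsilon> = Sup S" by (simp add: mod_conv_def S_def)
  obtain u::'a where u0: "u \<noteq> 0" using nt by blast
  define w where "w = sgn u"
  have nw: "norm w = 1" using u0 by (simp add: w_def norm_sgn)
  define y1 where "y1 = (\<epsilon>/2) *\<^sub>R w"
  define y2 where "y2 = (- \<epsilon>/2) *\<^sub>R w"
  have "y1 - y2 = (\<epsilon>/2 - (-\<epsilon>/2)) *\<^sub>R w"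
    by (simp only: y1_def y2_def scaleR_left_diff_distrib)
  hence "y1 - y2 = \<epsilon> *\<^sub>R w" by simp
  hence y: "norm y1 \<le> 1" "norm y2 \<le> 1" "norm (y1 - y2) = \<epsilon>"
    using nw e by (auto simp: y1_def y2_def)
  have bdd: "bdd_above S"
  proof (rule bdd_aboveI)
    fix \<delta> assume "\<delta> \<in> S"
    hence "cball ((1/2) *\<^sub>R (y1 + y2)) \<delta> \<subseteq> cball 0 1" "\<delta> \<ge> 0"
      using y by (auto simp: S_def dist_norm)
    from cball_sub_norm[OF nt this] show "\<delta> \<le> 1"
      using norm_ge_zero[of "(1/2) *\<^sub>R (y1 + y2) - 0"] by linarith
  qed
  have "v \<in> S"
  proof -
    have "cball ((1/2) *\<^sub>R (x1 + x2)) v \<subseteq> cball 0 1"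
      if "norm x1 \<le> 1" "norm x2 \<le> 1" "norm (x1 - x2) = \<epsilon>" for x1 x2 :: 'a
    proof
      fix z assume "z \<in> cball ((1/2) *\<^sub>R (x1 + x2)) v"
      hence "norm (z - (1/2) *\<^sub>R (x1 + x2)) \<le> v" by (simp add: dist_norm norm_minus_commute)
      moreover have "norm z \<le> norm ((1/2) *\<^sub>R (x1 + x2)) + norm (z - (1/2) *\<^sub>R (x1 + x2))"
        by (metis add.commute diff_add_cancel norm_triangle_ineq)
      ultimately show "z \<in> cball 0 1" using H[OF that] by (simp add: dist_norm)
    qed
    then show ?thesis using v0 by (auto simp: S_def dist_norm)
  qed
  then show ?thesis using mc bdd by (simp add: cSup_upper)
qed


lemma mc_nonneg:
  assumes nt: "\<exists>u::'a::real_normed_vector. u \<noteq> 0" and "0 \<le> e" "e \<le> 2"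
  shows "0 \<le> mod_conv TYPE('a) e"
proof (rule mc_ge[OF nt _ _ assms(2,3)])
  fix x1 x2 :: 'a assume "norm x1 \<le> 1" "norm x2 \<le> 1"
  moreover have "norm ((1/2) *\<^sub>R (x1 + x2)) \<le> (1/2) * (norm x1 + norm x2)"
    by (simp add: norm_triangle_ineq)
  ultimately show "norm ((1/2) *\<^sub>R (x1 + x2)) + 0 \<le> 1" by simp
qed simp

lemma mc_mono:
  assumes nt: "\<exists>u::'a::real_normed_vector. u \<noteq> 0" and e: "0 \<le> e1" "e1 \<le> e2" "e2 \<le> 2"
  shows "mod_conv TYPE('a) e1 \<le> mod_conv TYPE('a) e2"
proof (rule mc_ge[OF nt mc_nonneg[OF nt]])
  show "0 \<le> e1" "e1 \<le> 2" using e by auto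
  show "0 \<le> e2" "e2 \<le> 2" using e by auto
  fix x1 x2 :: 'a assume x: "norm x1 \<le> 1" "norm x2 \<le> 1" "norm (x1 - x2) = e2"
  show "norm ((1/2) *\<^sub>R (x1 + x2)) + mod_conv TYPE('a) e1 \<le> 1"
  proof (cases "e2 = 0")
    case True
    then have "e1 = e2" using e by simp
    then show ?thesis using mc_mid[OF nt x] by simp
  next
    case False
    hence e2p: "e2 > 0" using e by simp
    define t where "t = (e2 - e1) / (2 * e2)"
    have t: "0 \<le> t" "t \<le> 1" "1 - 2 * t = e1 / e2" using e e2p by (auto simp: t_def field_simps)
    define y1 where "y1 = (1 - t) *\<^sub>R x1 + t *\<^sub>R x2"
    define y2 where "y2 = t *\<^sub>R x1 + (1 - t) *\<^sub>R x2"
    have "norm y1 \<le> (1 - t) * norm x1 + t * norm x2"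
      unfolding y1_def using t by (metis (no_types) abs_of_nonneg diff_ge_0_iff_ge norm_scaleR norm_triangle_le add_mono order_refl)
    hence n1: "norm y1 \<le> 1" using x t by (smt (verit) mult_left_le)
    have "norm y2 \<le> t * norm x1 + (1 - t) * norm x2"
      unfolding y2_def using t by (metis (no_types) abs_of_nonneg diff_ge_0_iff_ge norm_scaleR norm_triangle_le add_mono order_refl)
    hence n2: "norm y2 \<le> 1" using x t by (smt (verit) mult_left_le)
    have "y1 - y2 = ((1 - t) - t) *\<^sub>R x1 - ((1 - t) - t) *\<^sub>R x2"
      unfolding y1_def y2_def by (simp only: scaleR_diff_left) (simp add: algebra_simps)
    hence "y1 - y2 = (1 - 2 * t) *\<^sub>R (x1 - x2)" by (simp add: scaleR_diff_right)
    hence "norm (y1 - y2) = e1" using t x e2p e by (simp add: abs_of_nonneg)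
    from mc_mid[OF nt n1 n2 this]
    have "norm ((1/2) *\<^sub>R (y1 + y2)) \<le> 1 - mod_conv TYPE('a) e1" .
    moreover have "y1 + y2 = x1 + x2" by (simp add: y1_def y2_def algebra_simps)
    ultimately show ?thesis by simp
  qed
qed

lemma mc_left:
  assumes nt: "\<exists>u::'a::real_normed_vector. u \<noteq> 0" and e: "0 \<le> e1" "e1 \<le> e2" "e2 \<le> 2" "e1 < 2"
  shows "mod_conv TYPE('a) e2 - (e2 - e1) / (2 - e1) \<le> mod_conv TYPE('a) e1"
proof -
  define \<mu> where "\<mu> = (e2 - e1) / (2 - e1)"
  have mu: "0 \<le> \<mu>" "\<mu> \<le> 1" using e by (auto simp: \<mu>_def field_simps)
  obtain u::'a where u0: "u \<noteq> 0" using nt by blast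
  have "max 0 (mod_conv TYPE('a) e2 - \<mu>) \<le> mod_conv TYPE('a) e1"
  proof (rule mc_ge[OF nt])
    show "0 \<le> max 0 (mod_conv TYPE('a) e2 - \<mu>)" by simp
    show "0 \<le> e1" "e1 \<le> 2" using e by auto
    fix x1 x2 :: 'a assume x: "norm x1 \<le> 1" "norm x2 \<le> 1" "norm (x1 - x2) = e1"
    define w where "w = (if x1 = x2 then sgn u else sgn (x2 - x1))"
    have nw: "norm w = 1" using u0 by (auto simp: w_def norm_sgn)
    have xw: "x2 - x1 = e1 *\<^sub>R w"
    proof (cases "x1 = x2")
      case True then show ?thesis using x by simp
    next
      case False
      hence "e1 \<noteq> 0" using x by auto
      then show ?thesis using x \<open>x1 \<noteq> x2\<close> by (simp add: w_def sgn_div_norm norm_minus_commute)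
    qed
    define y1 where "y1 = (1 - \<mu>) *\<^sub>R x1 - \<mu> *\<^sub>R w"
    define y2 where "y2 = (1 - \<mu>) *\<^sub>R x2 + \<mu> *\<^sub>R w"
    have "norm y1 \<le> (1 - \<mu>) * norm x1 + \<mu> * norm w"
      unfolding y1_def using mu by (metis (no_types) abs_of_nonneg diff_ge_0_iff_ge norm_scaleR norm_triangle_ineq4 add_mono order_trans order_refl)
    hence n1: "norm y1 \<le> 1" using x mu nw by (smt (verit) mult_left_le)
    have "norm y2 \<le> (1 - \<mu>) * norm x2 + \<mu> * norm w"
      unfolding y2_def using mu by (metis (no_types) abs_of_nonneg diff_ge_0_iff_ge norm_scaleR norm_triangle_le add_mono order_refl)
    hence n2: "norm y2 \<le> 1" using x mu nw by (smt (verit) mult_left_le)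
    have mm: "(2 * \<mu>) *\<^sub>R w = \<mu> *\<^sub>R w + \<mu> *\<^sub>R w" by (metis scaleR_add_left mult_2)
    have "y2 - y1 = (1 - \<mu>) *\<^sub>R (x2 - x1) + (2 * \<mu>) *\<^sub>R w"
      unfolding mm by (simp add: y1_def y2_def algebra_simps)
    also have "\<dots> = ((1 - \<mu>) * e1 + 2 * \<mu>) *\<^sub>R w" by (simp add: xw algebra_simps)
    finally have "norm (y2 - y1) = \<bar>(1 - \<mu>) * e1 + 2 * \<mu>\<bar>" using nw by simp
    also have "(1 - \<mu>) * e1 + 2 * \<mu> = e2"
    proof -
      have "\<mu> * (2 - e1) = e2 - e1" using e by (simp add: \<mu>_def)
      moreover have "(1 - \<mu>) * e1 + 2 * \<mu> = e1 + \<mu> * (2 - e1)" by (simp add: algebra_simps)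
      ultimately show ?thesis by simp
    qed
    finally have "norm (y1 - y2) = e2" using e by (simp add: norm_minus_commute)
    from mc_mid[OF nt n1 n2 this]
    have "norm ((1/2) *\<^sub>R (y1 + y2)) \<le> 1 - mod_conv TYPE('a) e2" .
    moreover have "(1/2) *\<^sub>R (y1 + y2) = (1 - \<mu>) *\<^sub>R ((1/2) *\<^sub>R (x1 + x2))"
    proof -
      have "y1 + y2 = (1 - \<mu>) *\<^sub>R (x1 + x2)" by (simp add: y1_def y2_def scaleR_add_right)
      then show ?thesis by (simp add: scaleR_scaleR mult.commute)
    qed
    ultimately have A: "(1 - \<mu>) * norm ((1/2) *\<^sub>R (x1 + x2)) \<le> 1 - mod_conv TYPE('a) e2"
      using mu by simp
    have B: "norm ((1/2) *\<^sub>R (x1 + x2)) \<le> 1"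
    proof -
      have "norm ((1/2) *\<^sub>R (x1 + x2)) \<le> (1/2) * (norm x1 + norm x2)"
        by (simp add: norm_triangle_ineq)
      then show ?thesis using x by simp
    qed
    have "\<mu> * norm ((1/2) *\<^sub>R (x1 + x2)) \<le> \<mu>" using mult_left_mono[OF B mu(1)] by simp
    with A B show "norm ((1/2) *\<^sub>R (x1 + x2)) + max 0 (mod_conv TYPE('a) e2 - \<mu>) \<le> 1"
      by (auto simp: algebra_simps)
  qed
  then show ?thesis by (simp add: \<mu>_def)
qed

lemma lemU:
  fixes p1 p2 x :: "'a::real_normed_vector"
  assumes nt: "\<exists>u::'a. u \<noteq> 0" and d: "d > 0" "0 \<le> R" "R \<le> d"
    and p: "norm (p1 - x) \<le> R" "norm (p2 - x) \<le> R"
  shows "norm ((1/2) *\<^sub>R (p1 + p2) - x) \<le> R - d * mod_conv TYPE('a) (norm (p1 - p2) / d)"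
proof -
  obtain u::'a where u0: "u \<noteq> 0" using nt by blast
  define m where "m = (1/2) *\<^sub>R (p1 + p2)"
  define v where "v = (if m = x then sgn u else sgn (m - x))"
  have nv: "norm v = 1" using u0 by (auto simp: v_def norm_sgn)
  define c where "c = x - (d - R) *\<^sub>R v"
  have mc: "m - c = (norm (m - x) + (d - R)) *\<^sub>R v"
  proof (cases "m = x")
    case True then show ?thesis by (simp add: c_def)
  next
    case False
    hence "norm (m - x) *\<^sub>R v = m - x" by (simp add: v_def sgn_div_norm)
    then show ?thesis by (simp add: c_def algebra_simps)
  qed
  hence nmc: "norm (m - c) = norm (m - x) + (d - R)" using nv d by simp
  have pc: "norm (p - c) \<le> d" if "norm (p - x) \<le> R" for p
  proof -
    have "p - c = (p - x) + (d - R) *\<^sub>R v" by (simp add: c_def)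
    hence "norm (p - c) \<le> norm (p - x) + norm ((d - R) *\<^sub>R v)" by (metis norm_triangle_ineq)
    then show ?thesis using that nv d by simp
  qed
  define y1 where "y1 = (1/d) *\<^sub>R (p1 - c)"
  define y2 where "y2 = (1/d) *\<^sub>R (p2 - c)"
  have "norm y1 = norm (p1 - c) / d" using d unfolding y1_def norm_scaleR by simp
  hence n1: "norm y1 \<le> 1" using pc[OF p(1)] d by simp
  have "norm y2 = norm (p2 - c) / d" using d unfolding y2_def norm_scaleR by simp
  hence n2: "norm y2 \<le> 1" using pc[OF p(2)] d by simp
  have "y1 - y2 = (1/d) *\<^sub>R (p1 - p2)" by (simp add: y1_def y2_def algebra_simps)
  hence "norm (y1 - y2) = norm (p1 - p2) / d" using d by simp
  from mc_mid[OF nt n1 n2 this]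
  have "norm ((1/2) *\<^sub>R (y1 + y2)) \<le> 1 - mod_conv TYPE('a) (norm (p1 - p2) / d)" .
  moreover have "(1/2) *\<^sub>R (y1 + y2) = (1/d) *\<^sub>R (m - c)"
  proof -
    have "y1 + y2 = (1/d) *\<^sub>R ((p1 - c) + (p2 - c))" by (simp add: y1_def y2_def scaleR_add_right)
    moreover have "(p1 - c) + (p2 - c) = 2 *\<^sub>R (m - c)"
      by (simp add: m_def scaleR_diff_right scaleR_add_right scaleR_2)
    ultimately show ?thesis by (simp add: scaleR_scaleR)
  qed
  ultimately have "norm (m - c) / d \<le> 1 - mod_conv TYPE('a) (norm (p1 - p2) / d)"
    using d by simp
  hence "norm (m - c) \<le> d - d * mod_conv TYPE('a) (norm (p1 - p2) / d)"
    using d by (simp add: field_simps)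
  with nmc show ?thesis by (simp add: m_def)
qed


definition Sg :: "'a::real_normed_vector set \<Rightarrow> real \<Rightarrow> real set" where
  "Sg A \<tau> = {\<gamma>. \<gamma> > 0 \<and>
      (\<forall>x1\<in>A. \<forall>x2\<in>A. norm (x1 - x2) \<le> \<tau> \<longrightarrow> cball ((1/2) *\<^sub>R (x1 + x2)) \<gamma> \<inter> A \<noteq> {})}"

lemma g0_Sg: "mod_nonconv0 A \<tau> = Inf (Sg A \<tau>)"
  by (simp add: mod_nonconv0_def Sg_def)

lemma Sg_ne:
  fixes A :: "'a::real_normed_vector set"
  assumes "A \<subseteq> cball a r" "r \<ge> 0"
  shows "r + 1 \<in> Sg A \<tau>"
proof -
  have "x1 \<in> cball ((1/2) *\<^sub>R (x1 + x2)) (r + 1)" if "x1 \<in> A" "x2 \<in> A" for x1 x2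
  proof -
    have hx: "x1 = (1/2) *\<^sub>R x1 + (1/2) *\<^sub>R x1" by (simp flip: scaleR_add_left)
    have "(1/2) *\<^sub>R (x1 + x2) - x1 = (1/2) *\<^sub>R ((x2 - a) - (x1 - a))"
      by (subst (2) hx) (simp add: scaleR_diff_right scaleR_add_right)
    hence "norm ((1/2) *\<^sub>R (x1 + x2) - x1) = (1/2) * norm ((x2 - a) - (x1 - a))"
      by simp
    hence "norm ((1/2) *\<^sub>R (x1 + x2) - x1) \<le> (1/2) * (norm (x2 - a) + norm (x1 - a))"
      using mult_left_mono[OF norm_triangle_ineq4[of "x2 - a" "x1 - a"], of "1/2"] by simp
    moreover have "norm (x2 - a) \<le> r" "norm (x1 - a) \<le> r"
      using that assms by (auto simp: dist_norm norm_minus_commute)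
    ultimately show ?thesis by (simp add: dist_norm norm_minus_commute)
  qed
  then have "\<forall>x1\<in>A. \<forall>x2\<in>A. cball ((1/2) *\<^sub>R (x1 + x2)) (r + 1) \<inter> A \<noteq> {}" by blast
  then show ?thesis using assms by (auto simp: Sg_def)
qed

lemma Sg_bdd: "bdd_below (Sg A \<tau>)"
  by (rule bdd_belowI[of _ 0]) (auto simp: Sg_def)

lemma g0_mono:
  fixes A :: "'a::real_normed_vector set"
  assumes "A \<subseteq> cball a r" "r \<ge> 0" "\<tau>1 \<le> \<tau>2"
  shows "mod_nonconv0 A \<tau>1 \<le> mod_nonconv0 A \<tau>2"
  unfolding g0_Sg
proof (rule cInf_superset_mono)
  show "Sg A \<tau>2 \<noteq> {}" using Sg_ne[OF assms(1,2)] by blast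
  show "bdd_below (Sg A \<tau>1)" by (rule Sg_bdd)
  show "Sg A \<tau>2 \<subseteq> Sg A \<tau>1" using assms(3) by (auto simp: Sg_def)
qed

lemma g0_nonneg:
  fixes A :: "'a::real_normed_vector set"
  assumes "A \<subseteq> cball a r" "r \<ge> 0"
  shows "0 \<le> mod_nonconv0 A \<tau>"
  unfolding g0_Sg
proof (rule cInf_greatest)
  show "Sg A \<tau> \<noteq> {}" using Sg_ne[OF assms] by blast
qed (auto simp: Sg_def)

lemma g_eq:
  fixes A :: "'a::real_normed_vector set"
  assumes "A \<subseteq> cball a r" "r \<ge> 0" "\<epsilon> > 0"
  shows "mod_nonconv A \<epsilon> = Inf (mod_nonconv0 A ` {\<epsilon><..})"
proof -
  define L where "L = Inf (mod_nonconv0 A ` {\<epsilon><..})"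
  have ne: "mod_nonconv0 A ` {\<epsilon><..} \<noteq> {}" by auto
  have bdd: "bdd_below (mod_nonconv0 A ` {\<epsilon><..})"
    by (rule bdd_belowI[of _ 0]) (use g0_nonneg[OF assms(1,2)] in auto)
  have low: "L \<le> mod_nonconv0 A t" if "t > \<epsilon>" for t
    unfolding L_def using bdd that by (intro cINF_lower) auto
  have "(mod_nonconv0 A \<longlongrightarrow> L) (at_right \<epsilon>)"
  proof (rule order_tendstoI)
    fix y assume "y < L"
    then show "\<forall>\<^sub>F x in at_right \<epsilon>. y < mod_nonconv0 A x"
      unfolding eventually_at_right_field
      by (intro exI[of _ "\<epsilon> + 1"]) (auto intro: less_le_trans[OF _ low])
  next
    fix y assume "L < y"
    then obtain z where z: "z \<in> mod_nonconv0 A ` {\<epsilon><..}" "z < y"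
      unfolding L_def using cInf_lessD[OF ne] by blast
    then obtain \<tau> where \<tau>: "\<tau> > \<epsilon>" "mod_nonconv0 A \<tau> < y" by auto
    show "\<forall>\<^sub>F x in at_right \<epsilon>. mod_nonconv0 A x < y"
      unfolding eventually_at_right_field
    proof (intro exI[of _ \<tau>] conjI allI impI)
      fix t assume "t > \<epsilon>" "t < \<tau>"
      then show "mod_nonconv0 A t < y" using g0_mono[OF assms(1,2), of t \<tau>] \<tau> by simp
    qed (use \<tau> in simp)
  qed
  then have "Lim (at_right \<epsilon>) (mod_nonconv0 A) = L" by (intro tendsto_Lim) auto
  then show ?thesis using assms(3) by (simp add: mod_nonconv_def L_def)
qed

lemma g_W:
  fixes A :: "'a::real_normed_vector set"
  assumes "A \<subseteq> cball a r" "r \<ge> 0" "p1 \<in> A" "p2 \<in> A" "norm (p1 - p2) > 0" "\<eta> > 0"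
  shows "\<exists>q\<in>A. norm (q - (1/2) *\<^sub>R (p1 + p2)) \<le> mod_nonconv A (norm (p1 - p2)) + \<eta>"
proof -
  define \<epsilon> where "\<epsilon> = norm (p1 - p2)"
  have e: "\<epsilon> > 0" using assms by (simp add: \<epsilon>_def)
  have ne: "mod_nonconv0 A ` {\<epsilon><..} \<noteq> {}" by auto
  have "Inf (mod_nonconv0 A ` {\<epsilon><..}) < mod_nonconv A \<epsilon> + \<eta>"
    using g_eq[OF assms(1,2) e] assms(6) by simp
  then obtain z where "z \<in> mod_nonconv0 A ` {\<epsilon><..}" "z < mod_nonconv A \<epsilon> + \<eta>"
    using cInf_lessD[OF ne] by blast
  then obtain \<tau> where \<tau>: "\<tau> > \<epsilon>" "Inf (Sg A \<tau>) < mod_nonconv A \<epsilon> + \<eta>"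
    by (auto simp: g0_Sg)
  have "Sg A \<tau> \<noteq> {}" using Sg_ne[OF assms(1,2)] by blast
  from cInf_lessD[OF this \<tau>(2)] obtain \<gamma> where g: "\<gamma> \<in> Sg A \<tau>" "\<gamma> < mod_nonconv A \<epsilon> + \<eta>"
    by blast
  then have "cball ((1/2) *\<^sub>R (p1 + p2)) \<gamma> \<inter> A \<noteq> {}"
    using assms(3,4) \<tau>(1) by (auto simp: Sg_def \<epsilon>_def)
  then obtain q where "q \<in> A" "dist ((1/2) *\<^sub>R (p1 + p2)) q \<le> \<gamma>" by auto
  then show ?thesis using g by (intro bexI[of _ q]) (auto simp: dist_norm norm_minus_commute \<epsilon>_def)
qed

lemma g_mono:
  fixes A :: "'a::real_normed_vector set"
  assumes "A \<subseteq> cball a r" "r \<ge> 0" "0 < e1" "e1 \<le> e2"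
  shows "mod_nonconv A e1 \<le> mod_nonconv A e2"
proof -
  have bdd: "bdd_below (mod_nonconv0 A ` {e1<..})"
    by (rule bdd_belowI[of _ 0]) (use g0_nonneg[OF assms(1,2)] in auto)
  have "Inf (mod_nonconv0 A ` {e1<..}) \<le> Inf (mod_nonconv0 A ` {e2<..})"
    by (rule cInf_superset_mono) (use bdd assms in auto)
  then show ?thesis using g_eq[OF assms(1,2)] assms by simp
qed

lemma g_rc:
  fixes A :: "'a::real_normed_vector set"
  assumes "A \<subseteq> cball a r" "r \<ge> 0" "0 < \<epsilon>" "\<eta> > 0"
  shows "\<exists>h>0. mod_nonconv A (\<epsilon> + h) \<le> mod_nonconv A \<epsilon> + \<eta>"
proof -
  have ne: "mod_nonconv0 A ` {\<epsilon><..} \<noteq> {}" by auto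
  have "Inf (mod_nonconv0 A ` {\<epsilon><..}) < mod_nonconv A \<epsilon> + \<eta>"
    using g_eq[OF assms(1,2,3)] assms(4) by simp
  then obtain z where "z \<in> mod_nonconv0 A ` {\<epsilon><..}" "z < mod_nonconv A \<epsilon> + \<eta>"
    using cInf_lessD[OF ne] by blast
  then obtain \<tau> where \<tau>: "\<tau> > \<epsilon>" "mod_nonconv0 A \<tau> < mod_nonconv A \<epsilon> + \<eta>" by auto
  define h where "h = (\<tau> - \<epsilon>) / 2"
  have h: "h > 0" "\<epsilon> + h < \<tau>" using \<tau>(1) unfolding h_def by (simp_all add: field_simps)
  have bdd: "bdd_below (mod_nonconv0 A ` {\<epsilon> + h<..})"
    by (rule bdd_belowI[of _ 0]) (use g0_nonneg[OF assms(1,2)] in auto)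
  have "Inf (mod_nonconv0 A ` {\<epsilon> + h<..}) \<le> mod_nonconv0 A \<tau>"
    using h bdd by (intro cINF_lower) auto
  then have "mod_nonconv A (\<epsilon> + h) \<le> mod_nonconv0 A \<tau>"
    using g_eq[OF assms(1,2), of "\<epsilon> + h"] h assms(3) by simp
  then show ?thesis using h \<tau> by (intro exI[of _ h]) auto
qed


definition ff :: "'a::real_normed_vector itself \<Rightarrow> 'a set \<Rightarrow> real \<Rightarrow> real \<Rightarrow> real" where
  "ff T A d e = d * mod_conv T (e / d) - mod_nonconv A e"

locale setting =
  fixes A :: "'a::banach set" and d r :: real and a :: 'a
  assumes nt: "\<exists>u::'a. u \<noteq> 0"
    and dpos: "d > 0"
    and clA: "closed A" and neA: "A \<noteq> {}"
    and H6: "\<forall>\<epsilon>. 0 < \<epsilon> \<and> \<epsilon> < 2 * d \<longrightarrow> d * mod_conv TYPE('a) (\<epsilon> / d) > mod_nonconv A \<epsilon>"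
    and rpos: "r > 0" and sub: "A \<subseteq> cball a r" and rd: "2 * r < d"
begin

abbreviation "f \<equiv> ff TYPE('a) A d"

lemma fpos: "0 < e \<Longrightarrow> e < 2 * d \<Longrightarrow> f e > 0"
  using H6 by (simp add: ff_def)

lemma distA: "p \<in> A \<Longrightarrow> q \<in> A \<Longrightarrow> dist p q \<le> 2 * r"
proof -
  assume "p \<in> A" "q \<in> A"
  hence "dist a p \<le> r" "dist a q \<le> r" using sub by auto
  then show ?thesis using dist_triangle3[of p q a] by linarith
qed

lemma F_local:
  assumes e0: "0 < \<epsilon>0" and es: "\<epsilon>0 \<le> es" "es \<le> 2 * r"
  shows "\<exists>h>0. \<forall>e. \<epsilon>0 \<le> e \<and> e \<le> 2 * r \<and> \<bar>e - es\<bar> < h \<longrightarrow> f e \<ge> f es / 2"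
proof -
  define c where "c = f es"
  have c: "c > 0" unfolding c_def using e0 es rd by (intro fpos) auto
  obtain h1 where h1: "h1 > 0" "mod_nonconv A (es + h1) \<le> mod_nonconv A es + c / 4"
    using g_rc[OF sub _ _, of es "c/4"] rpos e0 es c by auto
  define h where "h = min h1 (c / 4)"
  have "f e \<ge> c / 2" if e: "\<epsilon>0 \<le> e" "e \<le> 2 * r" "\<bar>e - es\<bar> < h" for e
  proof (cases "e \<ge> es")
    case True
    have "mod_conv TYPE('a) (es / d) \<le> mod_conv TYPE('a) (e / d)"
      using True e0 es e rd dpos by (intro mc_mono[OF nt]) (auto simp: divide_right_mono field_simps)
    hence A1: "d * mod_conv TYPE('a) (es / d) \<le> d * mod_conv TYPE('a) (e / d)"
      using dpos by simp
    have "mod_nonconv A e \<le> mod_nonconv A (es + h1)"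
      using True e h_def e0 es rpos by (intro g_mono[OF sub]) auto
    moreover have "c = d * mod_conv TYPE('a) (es / d) - mod_nonconv A es" by (simp add: c_def ff_def)
    moreover have "f e = d * mod_conv TYPE('a) (e / d) - mod_nonconv A e" by (simp add: ff_def)
    ultimately show ?thesis using A1 h1 c by linarith
  next
    case False
    have ml: "mod_conv TYPE('a) (es / d) - (es / d - e / d) / (2 - e / d) \<le> mod_conv TYPE('a) (e / d)"
      using False e0 es e rd dpos by (intro mc_left[OF nt]) (auto simp: divide_right_mono field_simps)
    have le1: "e / d \<le> 1" using e rd dpos by (simp add: field_simps)
    have nn: "0 \<le> es / d - e / d" using False dpos by (simp add: divide_right_mono)
    have "(es / d - e / d) / (2 - e / d) \<le> (es / d - e / d)"
      using divide_left_mono[of 1 "2 - e / d" "es / d - e / d"] le1 nn by simp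
    hence "d * ((es / d - e / d) / (2 - e / d)) \<le> d * (es / d - e / d)"
      using dpos by (intro mult_left_mono) auto
    also have "d * (es / d - e / d) = es - e" using dpos by (simp add: field_simps)
    finally have "d * mod_conv TYPE('a) (e / d) \<ge> d * mod_conv TYPE('a) (es / d) - (es - e)"
      using ml dpos by (smt (verit) mult_left_mono right_diff_distrib)
    moreover have "es - e < c / 4" using e False h_def by auto
    moreover have "mod_nonconv A e \<le> mod_nonconv A es"
      using False e e0 rpos by (intro g_mono[OF sub]) auto
    moreover have "c = d * mod_conv TYPE('a) (es / d) - mod_nonconv A es" by (simp add: c_def ff_def)
    moreover have "f e = d * mod_conv TYPE('a) (e / d) - mod_nonconv A e" by (simp add: ff_def)
    ultimately show ?thesis using c by linarith
  qed
  moreover have "h > 0" using h1 c by (simp add: h_def)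
  ultimately show ?thesis unfolding c_def by blast
qed

lemma F:
  assumes e0: "0 < \<epsilon>0" "\<epsilon>0 \<le> 2 * r"
  shows "\<exists>\<eta>>0. \<forall>e. \<epsilon>0 \<le> e \<and> e \<le> 2 * r \<longrightarrow> f e \<ge> \<eta>"
proof -
  define S where "S = {\<epsilon>0..2 * r}"
  have "\<forall>es\<in>S. \<exists>h>0. \<forall>e. \<epsilon>0 \<le> e \<and> e \<le> 2 * r \<and> \<bar>e - es\<bar> < h \<longrightarrow> f e \<ge> f es / 2"
    using F_local e0 by (auto simp: S_def)
  then obtain h where h: "\<And>es. es \<in> S \<Longrightarrow> h es > 0"
    "\<And>es e. es \<in> S \<Longrightarrow> \<epsilon>0 \<le> e \<Longrightarrow> e \<le> 2 * r \<Longrightarrow> \<bar>e - es\<bar> < h es \<Longrightarrow> f e \<ge> f es / 2"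
    by metis
  have cS: "compact S" by (simp add: S_def)
  have cov: "S \<subseteq> (\<Union>c\<in>S. ball c (h c))" using h(1) by force
  obtain C where C: "C \<subseteq> S" "finite C" "S \<subseteq> (\<Union>c\<in>C. ball c (h c))"
    using compactE_image[of S S "\<lambda>c. ball c (h c)"] cS cov by auto
  have "\<epsilon>0 \<in> S" using e0 by (simp add: S_def)
  hence Cne: "C \<noteq> {}" using C by auto
  define \<eta> where "\<eta> = Min ((\<lambda>c. f c / 2) ` C)"
  have "\<eta> > 0" unfolding \<eta>_def using C Cne
    by (subst Min_gr_iff) (auto simp: S_def intro!: fpos dest!: subsetD[OF C(1)] | use e0 rd in linarith)+
  moreover have "f e \<ge> \<eta>" if "\<epsilon>0 \<le> e" "e \<le> 2 * r" for e
  proof -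
    have "e \<in> S" using that by (simp add: S_def)
    then obtain c where c: "c \<in> C" "e \<in> ball c (h c)" using C by blast
    have "\<bar>e - c\<bar> < h c" using c by (simp add: dist_real_def abs_minus_commute)
    hence "f e \<ge> f c / 2" using h(2)[of c e] c C that by auto
    moreover have "\<eta> \<le> f c / 2" unfolding \<eta>_def using C c by (intro Min_le) auto
    ultimately show ?thesis by simp
  qed
  ultimately show ?thesis by blast
qed

end

definition proj :: "'a::metric_space set \<Rightarrow> 'a \<Rightarrow> 'a" where
  "proj A x = (SOME p. p \<in> A \<and> dist x p = infdist x A)"

context setting begin

lemma K:
  assumes p: "p \<in> A" "p' \<in> A" "dist x p \<le> R" "dist x p' \<le> R" "R \<le> d" "p \<noteq> p'"
  shows "f (norm (p - p')) \<le> R - infdist x A"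
proof -
  define \<epsilon> where "\<epsilon> = norm (p - p')"
  have e: "\<epsilon> > 0" using p by (simp add: \<epsilon>_def)
  have R0: "0 \<le> R" using p(3) zero_le_dist[of x p] by linarith
  define m where "m = (1/2) *\<^sub>R (p + p')"
  have U: "norm (m - x) \<le> R - d * mod_conv TYPE('a) (\<epsilon> / d)"
    unfolding m_def \<epsilon>_def using p R0 dpos
    by (intro lemU[OF nt]) (auto simp: dist_norm norm_minus_commute)
  have "d * mod_conv TYPE('a) (\<epsilon> / d) - mod_nonconv A \<epsilon> \<le> R - infdist x A + \<eta>" if eta: "\<eta> > 0" for \<eta>
  proof -
    obtain q where q: "q \<in> A" "norm (q - m) \<le> mod_nonconv A \<epsilon> + \<eta>"
      using g_W[OF sub _ p(1,2) _ eta] rpos e unfolding m_def \<epsilon>_def by auto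
    have "infdist x A \<le> dist x q" using q(1) by (rule infdist_le)
    also have "dist x q \<le> norm (m - x) + norm (q - m)"
      using norm_triangle_ineq[of "m - x" "q - m"] by (simp add: dist_norm norm_minus_commute)
    finally show ?thesis using U q(2) by linarith
  qed
  hence "d * mod_conv TYPE('a) (\<epsilon> / d) - mod_nonconv A \<epsilon> \<le> R - infdist x A"
    by (rule field_le_epsilon)
  then show ?thesis by (simp add: ff_def \<epsilon>_def)
qed

lemma K2:
  assumes "\<epsilon>0 > 0"
  shows "\<exists>\<eta>0>0. \<forall>x p p' R. p \<in> A \<and> p' \<in> A \<and> dist x p \<le> R \<and> dist x p' \<le> R \<and> R \<le> d \<and>
           R < infdist x A + \<eta>0 \<longrightarrow> dist p p' < \<epsilon>0"
proof (cases "\<epsilon>0 > 2 * r")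
  case True
  then show ?thesis using distA by (intro exI[of _ 1]) force
next
  case False
  then obtain \<eta> where \<eta>: "\<eta> > 0" "\<And>e. \<epsilon>0 \<le> e \<Longrightarrow> e \<le> 2 * r \<Longrightarrow> f e \<ge> \<eta>"
    using F[of \<epsilon>0] assms by auto
  show ?thesis
  proof (intro exI[of _ \<eta>] conjI allI impI)
    fix x p p' R
    assume H: "p \<in> A \<and> p' \<in> A \<and> dist x p \<le> R \<and> dist x p' \<le> R \<and> R \<le> d \<and> R < infdist x A + \<eta>"
    show "dist p p' < \<epsilon>0"
    proof (rule ccontr)
      assume "\<not> dist p p' < \<epsilon>0"
      hence ge: "\<epsilon>0 \<le> norm (p - p')" by (simp add: dist_norm)
      hence "p \<noteq> p'" using assms by auto
      hence "f (norm (p - p')) \<le> R - infdist x A" using H by (intro K) auto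
      moreover have "norm (p - p') \<le> 2 * r" using distA[of p p'] H by (simp add: dist_norm)
      ultimately show False using \<eta>(2)[OF ge] H by linarith
    qed
  qed (use \<eta> in simp)
qed

lemma exists_proj:
  assumes "infdist x A < d"
  shows "\<exists>p\<in>A. dist x p = infdist x A"
proof -
  define \<rho> where "\<rho> = infdist x A"
  define e :: "nat \<Rightarrow> real" where "e n = (d - \<rho>) / (real n + 2)" for n
  have epos: "e n > 0" for n using assms by (simp add: e_def \<rho>_def)
  have ele: "e n \<le> d - \<rho>" for n
    unfolding e_def using divide_left_mono[of 1 "real n + 2" "d - \<rho>"] assms by (simp add: \<rho>_def)
  have esmall: "\<exists>n. e n < t" if "t > 0" for t
  proof -
    obtain n where n: "(d - \<rho>) / t < real n" using reals_Archimedean2 by blast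
    hence "d - \<rho> < real n * t" using that by (simp add: field_simps)
    also have "\<dots> < (real n + 2) * t" using that by (simp add: field_simps)
    finally have "e n < t" by (simp add: e_def field_simps)
    then show ?thesis by blast
  qed
  define S where "S n = A \<inter> cball x (\<rho> + e n)" for n
  obtain p where p: "\<And>n. p \<in> S n"
  proof (rule decreasing_closed_nest[of S])
    show "closed (S n)" for n using clA by (simp add: S_def closed_Int)
    show "S n \<noteq> {}" for n
    proof -
      have "(INF a\<in>A. dist x a) < \<rho> + e n" using epos[of n] neA by (simp add: \<rho>_def infdist_notempty)
      then obtain q where "q \<in> A" "dist x q < \<rho> + e n"
        using cINF_less_iff[OF neA, of "dist x"] by auto
      then show ?thesis by (auto simp: S_def)
    qed
    show "S n \<subseteq> S m" if "m \<le> n" for m n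
    proof -
      have "e n \<le> e m" unfolding e_def using assms that
        by (intro divide_left_mono) (auto simp: \<rho>_def)
      then show ?thesis by (auto simp: S_def)
    qed
    show "\<exists>n. \<forall>y\<in>S n. \<forall>z\<in>S n. dist y z < \<epsilon>" if epos0: "\<epsilon> > 0" for \<epsilon>
    proof -
      obtain \<eta>0 where \<eta>0: "\<eta>0 > 0" "\<forall>x p p' R. p \<in> A \<and> p' \<in> A \<and> dist x p \<le> R \<and> dist x p' \<le> R \<and> R \<le> d \<and>
           R < infdist x A + \<eta>0 \<longrightarrow> dist p p' < \<epsilon>"
        using K2[OF epos0] by blast
      obtain n where n: "e n < \<eta>0" using esmall[OF \<eta>0(1)] by blast
      have "dist y z < \<epsilon>" if "y \<in> S n" "z \<in> S n" for y z
        using \<eta>0(2)[rule_format, of y z x "\<rho> + e n"] that n ele[of n]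
        by (auto simp: S_def \<rho>_def)
      then show ?thesis by blast
    qed
  qed (blast intro: that)
  have pA: "p \<in> A" using p[of 0] by (simp add: S_def)
  have "dist x p \<le> \<rho>"
  proof (rule ccontr)
    assume "\<not> dist x p \<le> \<rho>"
    then obtain n where "e n < dist x p - \<rho>" using esmall by force
    moreover have "dist x p \<le> \<rho> + e n" using p[of n] by (simp add: S_def)
    ultimately show False by simp
  qed
  moreover have "\<rho> \<le> dist x p" unfolding \<rho>_def using pA by (rule infdist_le)
  ultimately show ?thesis using pA by (auto simp: \<rho>_def)
qed

lemma unique_proj:
  assumes "p \<in> A" "p' \<in> A" "dist x p = infdist x A" "dist x p' = infdist x A" "infdist x A \<le> d"
  shows "p = p'"
proof -
  have "dist p p' < \<epsilon>" if epos0: "\<epsilon> > 0" for \<epsilon>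
  proof -
    obtain \<eta>0 where \<eta>0: "\<eta>0 > 0" "\<forall>x p p' R. p \<in> A \<and> p' \<in> A \<and> dist x p \<le> R \<and> dist x p' \<le> R \<and> R \<le> d \<and>
           R < infdist x A + \<eta>0 \<longrightarrow> dist p p' < \<epsilon>"
      using K2[OF epos0] by blast
    then show ?thesis using \<eta>0(2)[rule_format, of p p' x "infdist x A"] assms by auto
  qed
  then have "dist p p' = 0" by (metis dist_not_less_zero less_eq_real_def not_less zero_le_dist dist_self)
  then show ?thesis by simp
qed

lemma proj_props:
  assumes "infdist x A < d"
  shows "proj A x \<in> A" "dist x (proj A x) = infdist x A"
proof -
  have "\<exists>p. p \<in> A \<and> dist x p = infdist x A" using exists_proj[OF assms] by blast
  from someI_ex[OF this] show "proj A x \<in> A" "dist x (proj A x) = infdist x A"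
    unfolding proj_def by auto
qed

lemma infdist_ball: "x \<in> cball a r \<Longrightarrow> infdist x A \<le> 2 * r"
proof -
  assume x: "x \<in> cball a r"
  obtain p where p: "p \<in> A" using neA by blast
  have "dist a p \<le> r" "dist a x \<le> r" using p sub x by auto
  hence "dist x p \<le> 2 * r" using dist_triangle3[of x p a] by linarith
  then show ?thesis using infdist_le2[OF p] by blast
qed

lemma proj_cont: "continuous_on (cball a r) (proj A)"
  unfolding continuous_on_iff
proof (intro ballI allI impI)
  fix x and \<epsilon> :: real assume x: "x \<in> cball a r" and e: "\<epsilon> > 0"
  obtain \<eta>0 where \<eta>0: "\<eta>0 > 0" "\<forall>x p p' R. p \<in> A \<and> p' \<in> A \<and> dist x p \<le> R \<and> dist x p' \<le> R \<and> R \<le> d \<and>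
           R < infdist x A + \<eta>0 \<longrightarrow> dist p p' < \<epsilon>"
    using K2[OF e] by blast
  define \<delta> where "\<delta> = min (\<eta>0 / 2) ((d - 2 * r) / 2)"
  have dpos': "\<delta> > 0" using \<eta>0 rd by (simp add: \<delta>_def)
  have "dist (proj A y) (proj A x) < \<epsilon>" if y: "y \<in> cball a r" "dist y x < \<delta>" for y
  proof -
    have ix: "infdist x A \<le> 2 * r" "infdist y A \<le> 2 * r" using infdist_ball x y by auto
    hence px: "proj A x \<in> A" "dist x (proj A x) = infdist x A"
      and py: "proj A y \<in> A" "dist y (proj A y) = infdist y A"
      using proj_props rd by (auto simp del: dist_commute)
    define R where "R = infdist x A + 2 * dist x y"
    have "infdist y A \<le> infdist x A + dist y x" by (rule infdist_triangle)
    hence "dist x (proj A y) \<le> R"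
      using dist_triangle[of x "proj A y" y] py(2) by (simp add: R_def dist_commute)
    moreover have "dist x (proj A x) \<le> R" using px(2) by (simp add: R_def)
    moreover have "R \<le> d" "R < infdist x A + \<eta>0"
      using ix y(2) by (auto simp: R_def \<delta>_def dist_commute)
    ultimately show ?thesis using \<eta>0(2) px(1) py(1) by blast
  qed
  then show "\<exists>\<delta>>0. \<forall>y\<in>cball a r. dist y x < \<delta> \<longrightarrow> dist (proj A y) (proj A x) < \<epsilon>"
    using dpos' by blast
qed

end

theorem theorem3p4:
  fixes A :: "'a::banach set" and d r :: real and a :: 'a
  assumes "uniformly_convex_space TYPE('a)"
    and "d > 0"
    and "closed A" and "A \<noteq> {}"
    and "weakly_convex_on A (2 * d)"
    and "\<forall>\<epsilon>. 0 < \<epsilon> \<and> \<epsilon> < 2 * d \<longrightarrow> d * mod_conv TYPE('a) (\<epsilon> / d) > mod_nonconv A \<epsilon>"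
    and "condition_i (\<lambda>t. d * mod_conv TYPE('a) (t / d)) (mod_nonconv A) (2 * d)"
    and "r > 0" and "A \<subseteq> cball a r" and "2 * r < d"
    and "\<forall>\<epsilon>. 0 < \<epsilon> \<and> \<epsilon> < diameter A \<longrightarrow> mod_nonconv A \<epsilon> < d * mod_conv TYPE('a) (\<epsilon> / d)"
  shows "\<exists>\<phi>. continuous_on UNIV \<phi> \<and> \<phi> ` UNIV \<subseteq> A \<and> (\<forall>x\<in>A. \<phi> x = x)"
proof (cases "\<exists>u::'a. u \<noteq> 0")
  case False
  then have z: "\<And>x::'a. x = 0" by blast
  obtain p where "p \<in> A" using assms(4) by blast
  then have "A = UNIV" using z by (metis UNIV_eq_I)
  then show ?thesis by (intro exI[of _ id]) auto
next
  case True
  interpret setting A d r a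
    using True assms by unfold_locales auto
  define \<psi> where "\<psi> y = a + (r / max r (norm (y - a))) *\<^sub>R (y - a)" for y
  have \<psi>c: "continuous_on UNIV \<psi>" unfolding \<psi>_def
    by (intro continuous_intros) (use rpos in auto)
  have \<psi>b: "\<psi> y \<in> cball a r" for y
  proof -
    have "dist a (\<psi> y) = r / max r (norm (y - a)) * norm (y - a)"
      using rpos by (simp add: \<psi>_def dist_norm)
    also have "\<dots> \<le> r" using rpos by (simp add: field_simps)
    finally show ?thesis by simp
  qed
  have \<psi>id: "\<psi> y = y" if "y \<in> cball a r" for y
  proof -
    have "norm (y - a) \<le> r" using that by (simp add: dist_norm norm_minus_commute)
    then show ?thesis using rpos by (simp add: \<psi>_def max_def)
  qed
  have inA: "proj A z \<in> A" if "z \<in> cball a r" for z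
    using proj_props(1)[of z] infdist_ball[OF that] rd by linarith
  show ?thesis
  proof (intro exI[of _ "\<lambda>y. proj A (\<psi> y)"] conjI ballI)
    show "continuous_on UNIV (\<lambda>y. proj A (\<psi> y))"
      by (rule continuous_on_compose2[OF proj_cont \<psi>c]) (use \<psi>b in auto)
    show "(\<lambda>y. proj A (\<psi> y)) ` UNIV \<subseteq> A" using inA \<psi>b by auto
  next
    fix x assume x: "x \<in> A"
    hence xb: "x \<in> cball a r" using sub by auto
    have "infdist x A \<le> d" using infdist_ball[OF xb] rd by linarith
    moreover have "dist x (proj A x) = infdist x A"
      using proj_props(2)[of x] infdist_ball[OF xb] rd by linarith
    ultimately have "proj A x = x"
      using unique_proj[of "proj A x" x x] inA[OF xb] x by simp
    then show "proj A (\<psi> x) = x" using \<psi>id[OF xb] by simp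
  qed
qed

end
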